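(* Let $t_0>0$. A tame power series $\alpha$ is uniquely determined by the sequence of values $B_\alpha[n;t_0]$, $n\ge0$: if $\alpha,\alpha'$ are tame power series with $B_\alpha[n;t_0]=B_{\alpha'}[n;t_0]$ for all $n\ge0$, then $\alpha=\alpha'$.
   Context: A power series $\alpha(z)=\sum_{n\ge0}a_{n+1}z^n$ is tame if it converges on the open unit disk, extends holomorphically to a punctured neighborhood of $z=1$ with a pole of order $\nu\ge0$ at $1$ ($\nu=0$ meaning holomorphic at $1$), and $(z-1)^\nu\alpha(z)$ equals, on an open neighborhood of $(0,1]$, a multi-power series $\sum_{\mathbf i\in\mathbb Z^N_{\ge0}}c_{\mathbf i}\prod_{j=1}^N(z^{e_j}-1)^{i_j}$ (some $N\ge1$, $e_j\in\mathbb Z_{>0}$) converging absolutely and uniformly there. Bernoulli polynomials of a tame $\alpha$ with pole order $\nu$ (each series uses its own $\nu$): $\sum_{n\ge0}B_\alpha[n;t]\frac{u^n}{n!}=(-u)^\nu\alpha(e^u)e^{tu}$ near $u=0$. *)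

theory Defs
  imports "HOL-Analysis.Analysis"
begin

text \<open>A power series alpha(z) = sum_{n>=0} a_{n+1} z^n is represented by its
coefficient sequence c, with c n = a_{n+1}.\<close>

definition pseries :: "(nat \<Rightarrow> complex) \<Rightarrow> complex \<Rightarrow> complex" where
  "pseries c z = (\<Sum>n. c n * z ^ n)"

definition multi_power_repr :: "(complex \<Rightarrow> complex) \<Rightarrow> complex set \<Rightarrow> bool" where
  "multi_power_repr H D \<longleftrightarrow>
     (\<exists>V (N::nat) (e::nat \<Rightarrow> nat) (coef::(nat \<Rightarrow> nat) \<Rightarrow> complex).
        open V \<and> complex_of_real ` {0<..1} \<subseteq> V \<and> V \<subseteq> D \<and>
        N \<ge> 1 \<and> (\<forall>j<N. e j > 0) \<and>
        (let I = {i::nat \<Rightarrow> nat. \<forall>j\<ge>N. i j = 0};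
             term = (\<lambda>i z. coef i * (\<Prod>j<N. (z ^ e j - 1) ^ i j))
         in (\<forall>z\<in>V. (\<lambda>i. norm (term i z)) summable_on I \<and>
                     ((\<lambda>i. term i z) has_sum H z) I) \<and>
            uniform_limit V (\<lambda>F z. \<Sum>i\<in>F. term i z) H (finite_subsets_at_top I)))"

text \<open>tame_data c nu A: the series c converges on the open unit disk, A agrees with
it there and is its holomorphic extension to a punctured neighbourhood ball 1 r - {1}
of 1, with a pole of order nu at 1 (nu = 0: holomorphic at 1), expressed by:
z \<mapsto> (z-1)^nu A(z), with value L at z = 1, is holomorphic on the unit disk
union ball 1 r, and L \<noteq> 0 if nu > 0.  Moreover (z-1)^nu alpha(z) has a
multi-power series representation near (0,1].\<close>

definition tame_data :: "(nat \<Rightarrow> complex) \<Rightarrow> nat \<Rightarrow> (complex \<Rightarrow> complex) \<Rightarrow> bool" where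
  "tame_data c \<nu> A \<longleftrightarrow>
     (\<forall>z. norm z < 1 \<longrightarrow> summable (\<lambda>n. c n * z ^ n)) \<and>
     (\<forall>z\<in>ball 0 1. A z = pseries c z) \<and>
     (\<exists>r>0. \<exists>L.
        (\<lambda>z. if z = 1 then L else (z - 1) ^ \<nu> * A z) holomorphic_on (ball 0 1 \<union> ball 1 r) \<and>
        (\<nu> = 0 \<or> L \<noteq> 0) \<and>
        multi_power_repr (\<lambda>z. if z = 1 then L else (z - 1) ^ \<nu> * A z) (ball 0 1 \<union> ball 1 r))"

definition tame :: "(nat \<Rightarrow> complex) \<Rightarrow> bool" where
  "tame c \<longleftrightarrow> (\<exists>\<nu> A. tame_data c \<nu> A)"

text \<open>B is the sequence of Bernoulli polynomials of alpha evaluated at t: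
sum_n B n u^n / n! = (-u)^nu alpha(e^u) e^{t u} near u = 0 (for u \<noteq> 0, the right-hand
side having a removable singularity at 0).\<close>

definition bernoulli_seq :: "(nat \<Rightarrow> complex) \<Rightarrow> real \<Rightarrow> (nat \<Rightarrow> complex) \<Rightarrow> bool" where
  "bernoulli_seq c t B \<longleftrightarrow>
     (\<exists>\<nu> A. tame_data c \<nu> A \<and>
        (\<exists>\<rho>>0. \<forall>u\<in>ball 0 \<rho> - {0}.
           (\<lambda>n. B n * u ^ n / fact n) sums
             ((- u) ^ \<nu> * A (exp u) * exp (complex_of_real t * u))))"

definition bernoulli_poly :: "(nat \<Rightarrow> complex) \<Rightarrow> nat \<Rightarrow> real \<Rightarrow> complex" where
  "bernoulli_poly c n t = (THE B. bernoulli_seq c t B) n"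

end

theory Submission
  imports Defs "HOL-Complex_Analysis.Complex_Analysis" "HOL-Real_Asymp.Real_Asymp"
begin


lemma shifted_summable:
  fixes a :: "nat \<Rightarrow> complex"
  assumes "summable (\<lambda>n. a n * z^n)"
  shows "summable (\<lambda>n. a (n+m) * z^n)"
proof (cases "z = 0")
  case True then show ?thesis by simp
next
  case False
  have "summable (\<lambda>n. a (n+m) * z^(n+m))"
    using summable_ignore_initial_segment[OF assms, of m] by simp
  then have "summable (\<lambda>n. (a (n+m) * z^(n+m)) * (1/z^m))"
    by (rule summable_mult2)
  moreover have "(\<lambda>n. (a (n+m) * z^(n+m)) * (1/z^m)) = (\<lambda>n. a (n+m) * z^n)"
    using False by (auto simp: power_add field_simps)
  ultimately show ?thesis by metis
qed

lemma shifted_eq: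
  fixes a :: "nat \<Rightarrow> complex"
  assumes "summable (\<lambda>n. a n * z^n)" and zero: "\<And>n. n < m \<Longrightarrow> a n = 0"
  shows "(\<Sum>n. a n * z^n) = z^m * (\<Sum>n. a (n+m) * z^n)"
proof -
  have "(\<Sum>n. a n * z^n) = (\<Sum>n. a (n+m) * z^(n+m)) + (\<Sum>i<m. a i * z^i)"
    by (rule suminf_split_initial_segment[OF assms(1)])
  also have "(\<Sum>i<m. a i * z^i) = 0" using zero by simp
  also have "(\<Sum>n. a (n+m) * z^(n+m)) = (\<Sum>n. z^m * (a (n+m) * z^n))"
    by (simp add: power_add algebra_simps)
  also have "\<dots> = z^m * (\<Sum>n. a (n+m) * z^n)"
    by (rule suminf_mult[OF shifted_summable[OF assms(1)]])
  finally show ?thesis by simp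
qed

lemma powser_limit_first:
  fixes a :: "nat \<Rightarrow> complex"
  assumes R: "R > 0" and summ: "\<And>z. norm z < R \<Longrightarrow> summable (\<lambda>n. a n * z^n)"
   and zero: "\<And>n. n < m \<Longrightarrow> a n = 0"
  shows "((\<lambda>z. (\<Sum>n. a n * z^n) / z^m) \<longlongrightarrow> a m) (at 0)"
proof -
  define Q where "Q z = (\<Sum>n. a (n+m) * z^n)" for z
  have "summable (\<lambda>n. a (n+m) * (complex_of_real (R/2))^n)"
    by (rule shifted_summable, rule summ) (use R in auto)
  then have "isCont Q 0" unfolding Q_def
    by (rule isCont_powser) (use R in auto)
  then have "(Q \<longlongrightarrow> Q 0) (at 0)" by (simp add: isCont_def)
  moreover have "Q 0 = a m" unfolding Q_def using powser_zero[of "\<lambda>n. a (n+m)"] by simp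
  ultimately have lim: "(Q \<longlongrightarrow> a m) (at 0)" by simp
  have ev: "eventually (\<lambda>z. z \<in> ball 0 R \<and> z \<noteq> 0) (at (0::complex))"
    unfolding eventually_at using R by (intro exI[of _ R]) (auto simp: dist_norm)
  show ?thesis
  proof (rule tendsto_cong[THEN iffD1, OF _ lim])
    show "eventually (\<lambda>z. Q z = (\<Sum>n. a n * z^n) / z^m) (at 0)"
      using ev
    proof eventually_elim
      case (elim z)
      then have "(\<Sum>n. a n * z^n) = z^m * Q z" unfolding Q_def
        using shifted_eq[OF summ zero] by auto
      then show ?case using elim by simp
    qed
  qed
qed

lemma powser_unique0:
  fixes a :: "nat \<Rightarrow> complex" and F :: "'b filter"
  assumes R: "R > 0" and summ: "\<And>z. norm z < R \<Longrightarrow> summable (\<lambda>n. a n * z^n)"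
   and F: "F \<noteq> bot" and g: "filterlim g (at 0) F"
   and ev: "eventually (\<lambda>s. (\<Sum>n. a n * g s ^ n) = 0) F"
  shows "a = (\<lambda>_. 0)"
proof (rule ccontr)
  assume "a \<noteq> (\<lambda>_. 0)"
  then have ex: "\<exists>n. a n \<noteq> 0" by auto
  define m where "m = (LEAST n. a n \<noteq> 0)"
  have am: "a m \<noteq> 0" unfolding m_def by (rule LeastI_ex[OF ex])
  have zero: "\<And>n. n < m \<Longrightarrow> a n = 0" unfolding m_def using not_less_Least by blast
  have "((\<lambda>s. (\<Sum>n. a n * g s ^ n) / g s ^ m) \<longlongrightarrow> a m) F"
    using filterlim_compose[OF powser_limit_first[OF R summ zero] g] by simp
  moreover have "((\<lambda>s. (\<Sum>n. a n * g s ^ n) / g s ^ m) \<longlongrightarrow> 0) F"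
    by (rule tendsto_eventually) (use ev in \<open>eventually_elim, simp\<close>)
  ultimately have "a m = 0" using tendsto_unique[OF F] by blast
  with am show False by simp
qed



lemma tame_data_cont1:
  assumes "tame_data c \<nu> A"
  obtains L where "(\<nu> = 0 \<or> L \<noteq> 0)"
    "isCont (\<lambda>z. if z = 1 then L else (z - 1) ^ \<nu> * A z) 1"
proof -
  from assms obtain r L where r: "r > 0" and
    hol: "(\<lambda>z. if z = 1 then L else (z - 1) ^ \<nu> * A z) holomorphic_on (ball 0 1 \<union> ball 1 r)"
    and L: "\<nu> = 0 \<or> L \<noteq> 0"
    unfolding tame_data_def by blast
  have "continuous_on (ball 0 1 \<union> ball 1 r) (\<lambda>z. if z = 1 then L else (z - 1) ^ \<nu> * A z)"
    using hol by (rule holomorphic_on_imp_continuous_on)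
  then have "isCont (\<lambda>z. if z = 1 then L else (z - 1) ^ \<nu> * A z) 1"
  proof -
    have "open (ball 0 1 \<union> ball (1::complex) r)" by auto
    moreover have "1 \<in> ball 0 1 \<union> ball (1::complex) r" using r by auto
    ultimately show ?thesis using continuous_on_eq_continuous_at \<open>continuous_on _ _\<close> by blast
  qed
  with L that show ?thesis by blast
qed

lemma tame_data_A:
  assumes "tame_data c \<nu> A" "z \<in> ball 0 1"
  shows "A z = pseries c z"
proof -
  have "\<forall>z\<in>ball 0 1. A z = pseries c z" using assms(1) unfolding tame_data_def by (elim conjE)
  then show ?thesis using assms(2) by blast
qed

lemma tame_data_summ:
  assumes "tame_data c \<nu> A" "norm z < 1"
  shows "summable (\<lambda>n. c n * z ^ n)"
proof -
  have "\<forall>z. norm z < 1 \<longrightarrow> summable (\<lambda>n. c n * z ^ n)" using assms(1) unfolding tame_data_def by (elim conjE)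
  then show ?thesis using assms(2) by blast
qed

lemma xs_lim: "((\<lambda>s::real. complex_of_real (1 - exp (-s))) \<longlongrightarrow> 1) at_top"
proof -
  have "((\<lambda>s::real. 1 - exp (-s)) \<longlongrightarrow> 1) at_top" by real_asymp
  then show ?thesis using tendsto_of_real by fastforce
qed

lemma nu_unique_lt:
  assumes d1: "tame_data c \<nu>1 A1" and d2: "tame_data c \<nu>2 A2" and lt: "\<nu>1 < \<nu>2"
  shows False
proof -
  obtain L1 where c1: "isCont (\<lambda>z. if z = 1 then L1 else (z - 1) ^ \<nu>1 * A1 z) 1"
    using tame_data_cont1[OF d1] by blast
  obtain L2 where L2: "\<nu>2 = 0 \<or> L2 \<noteq> 0" and c2: "isCont (\<lambda>z. if z = 1 then L2 else (z - 1) ^ \<nu>2 * A2 z) 1"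
    using tame_data_cont1[OF d2] by blast
  have L2': "L2 \<noteq> 0" using L2 lt by simp
  define x where "x s = complex_of_real (1 - exp (-s))" for s
  have l1: "((\<lambda>s. (\<lambda>z. if z = 1 then L1 else (z - 1) ^ \<nu>1 * A1 z) (x s)) \<longlongrightarrow> L1) at_top"
    using isCont_tendsto_compose[OF c1 xs_lim] unfolding x_def by simp
  have l2: "((\<lambda>s. (\<lambda>z. if z = 1 then L2 else (z - 1) ^ \<nu>2 * A2 z) (x s)) \<longlongrightarrow> L2) at_top"
    using isCont_tendsto_compose[OF c2 xs_lim] unfolding x_def by simp
  have l3: "((\<lambda>s. (x s - 1) ^ (\<nu>2 - \<nu>1)) \<longlongrightarrow> (1 - 1) ^ (\<nu>2 - \<nu>1)) at_top"
    unfolding x_def by (intro tendsto_intros xs_lim)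
  have l4: "((\<lambda>s. (x s - 1) ^ (\<nu>2 - \<nu>1) * (\<lambda>z. if z = 1 then L1 else (z - 1) ^ \<nu>1 * A1 z) (x s)) \<longlongrightarrow> 0) at_top"
    using tendsto_mult[OF l3 l1] lt by (simp add: zero_power)
  have ev: "eventually (\<lambda>s. (x s - 1) ^ (\<nu>2 - \<nu>1) * (\<lambda>z. if z = 1 then L1 else (z - 1) ^ \<nu>1 * A1 z) (x s)
      = (\<lambda>z. if z = 1 then L2 else (z - 1) ^ \<nu>2 * A2 z) (x s)) at_top"
    using eventually_gt_at_top[of 0]
  proof eventually_elim
    case (elim s)
    have e: "0 < exp (-s)" "exp (-s) < 1" using elim by auto
    have "norm (x s) < 1" unfolding x_def norm_of_real using e by simp
    moreover have "x s \<noteq> 1" unfolding x_def using e by (simp only: of_real_eq_1_iff)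
    ultimately have xb: "x s \<in> ball 0 1" "x s \<noteq> 1" by (auto simp: dist_norm)
    have "A1 (x s) = pseries c (x s)" "A2 (x s) = pseries c (x s)"
      using tame_data_A[OF d1] tame_data_A[OF d2] xb by auto
    have pw: "(x s - 1) ^ (\<nu>2 - \<nu>1) * (x s - 1) ^ \<nu>1 = (x s - 1) ^ \<nu>2"
      unfolding power_add[symmetric] using lt by simp
    have "(x s - 1) ^ (\<nu>2 - \<nu>1) * ((x s - 1) ^ \<nu>1 * A1 (x s)) = (x s - 1) ^ \<nu>2 * A2 (x s)"
      using pw \<open>A1 (x s) = _\<close> \<open>A2 (x s) = _\<close> by (metis mult.assoc)
    then show ?case using xb by simp
  qed
  have "((\<lambda>s. (\<lambda>z. if z = 1 then L2 else (z - 1) ^ \<nu>2 * A2 z) (x s)) \<longlongrightarrow> 0) at_top"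
    using tendsto_cong[THEN iffD1, OF ev l4] .
  from tendsto_unique[OF _ l2 this] have "L2 = 0" by simp
  with L2' show False by simp
qed

lemma nu_unique:
  assumes "tame_data c \<nu>1 A1" and "tame_data c \<nu>2 A2"
  shows "\<nu>1 = \<nu>2"
proof -
  have "\<not> \<nu>1 < \<nu>2" using nu_unique_lt[OF assms] by (rule notI)
  moreover have "\<not> \<nu>2 < \<nu>1" using nu_unique_lt[OF assms(2,1)] by (rule notI)
  ultimately show ?thesis by linarith
qed



lemma gs_filterlim: "filterlim (\<lambda>s::real. - complex_of_real (exp (-s))) (at 0) at_top"
proof -
  have "((\<lambda>s::real. exp (-s)) \<longlongrightarrow> 0) at_top" by real_asymp
  then have "((\<lambda>s::real. - complex_of_real (exp (-s))) \<longlongrightarrow> - complex_of_real 0) at_top"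
    by (intro tendsto_intros)
  then show ?thesis unfolding filterlim_at by simp
qed

lemma gs_props:
  assumes "\<rho> > 0"
  shows "eventually (\<lambda>s::real. - complex_of_real (exp (-s)) \<in> ball 0 \<rho> - {0} \<and>
     exp (- complex_of_real (exp (-s))) \<in> ball 0 1) at_top"
proof -
  have "((\<lambda>s::real. exp (-s)) \<longlongrightarrow> 0) at_top" by real_asymp
  from tendstoD[OF this assms] have "eventually (\<lambda>s::real. dist (exp (-s)) 0 < \<rho>) at_top" .
  then show ?thesis
  proof eventually_elim
    case (elim s)
    have ex: "exp (- complex_of_real (exp (-s))) = complex_of_real (exp (- exp (-s)))"
      by (metis exp_of_real of_real_minus)
    have e1: "exp (- exp (-s)) < 1" by simp
    have n1: "norm (exp (- complex_of_real (exp (-s)))) < 1"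
      unfolding ex norm_of_real using e1 by simp
    have n2: "norm (- complex_of_real (exp (-s))) < \<rho>"
      unfolding norm_minus_cancel norm_of_real using elim by simp
    have n3: "- complex_of_real (exp (-s)) \<noteq> 0" by simp
    show ?case using n1 n2 n3 by (simp only: mem_ball dist_0_norm Diff_iff singleton_iff) simp
  qed
qed

lemma bseq_unique:
  assumes b1: "bernoulli_seq c t B1" and b2: "bernoulli_seq c t B2"
  shows "B1 = B2"
proof -
  obtain \<nu>1 A1 \<rho>1 where d1: "tame_data c \<nu>1 A1" and r1: "\<rho>1 > 0" and
    s1: "\<And>u. u \<in> ball 0 \<rho>1 - {0} \<Longrightarrow> (\<lambda>n. B1 n * u ^ n / fact n) sums
             ((- u) ^ \<nu>1 * A1 (exp u) * exp (complex_of_real t * u))"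
    using b1 unfolding bernoulli_seq_def by blast
  obtain \<nu>2 A2 \<rho>2 where d2: "tame_data c \<nu>2 A2" and r2: "\<rho>2 > 0" and
    s2: "\<And>u. u \<in> ball 0 \<rho>2 - {0} \<Longrightarrow> (\<lambda>n. B2 n * u ^ n / fact n) sums
             ((- u) ^ \<nu>2 * A2 (exp u) * exp (complex_of_real t * u))"
    using b2 unfolding bernoulli_seq_def by blast
  have nu: "\<nu>1 = \<nu>2" by (rule nu_unique[OF d1 d2])
  define \<rho> where "\<rho> = min \<rho>1 \<rho>2"
  have r: "\<rho> > 0" using r1 r2 unfolding \<rho>_def by simp
  define a where "a n = (B1 n - B2 n) / fact n" for n
  have sa: "(\<lambda>n. a n * u ^ n) sums ((- u) ^ \<nu>1 * A1 (exp u) * exp (complex_of_real t * u)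
            - (- u) ^ \<nu>2 * A2 (exp u) * exp (complex_of_real t * u))"
    if "u \<in> ball 0 \<rho> - {0}" for u
  proof -
    have "(\<lambda>n. B1 n * u ^ n / fact n - B2 n * u ^ n / fact n) sums
        ((- u) ^ \<nu>1 * A1 (exp u) * exp (complex_of_real t * u)
            - (- u) ^ \<nu>2 * A2 (exp u) * exp (complex_of_real t * u))"
      by (rule sums_diff[OF s1 s2]) (use that in \<open>auto simp: \<rho>_def\<close>)
    moreover have "(\<lambda>n. B1 n * u ^ n / fact n - B2 n * u ^ n / fact n) = (\<lambda>n. a n * u ^ n)"
      unfolding a_def by (simp add: field_simps)
    ultimately show ?thesis by simp
  qed
  have summ: "summable (\<lambda>n. a n * u ^ n)" if "norm u < \<rho>" for u
  proof (cases "u = 0")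
    case True then show ?thesis by simp
  next
    case False then show ?thesis using sa[of u] that by (auto simp: sums_iff)
  qed
  have ev: "eventually (\<lambda>s. (\<Sum>n. a n * (- complex_of_real (exp (-s))) ^ n) = 0) at_top"
    using gs_props[OF r]
  proof eventually_elim
    case (elim s)
    define u where "u = - complex_of_real (exp (-s))"
    have u: "u \<in> ball 0 \<rho> - {0}" "exp u \<in> ball 0 1" using elim unfolding u_def by auto
    have "A1 (exp u) = A2 (exp u)" using tame_data_A[OF d1 u(2)] tame_data_A[OF d2 u(2)] by simp
    then have "(\<Sum>n. a n * u ^ n) = 0" using sums_unique[OF sa[OF u(1)], symmetric] nu by simp
    then show ?case unfolding u_def .
  qed
  have "a = (\<lambda>_. 0)"
    by (rule powser_unique0[OF r summ _ gs_filterlim ev]) simp_all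
  then show ?thesis unfolding a_def by (auto simp: fun_eq_iff dest: fun_cong)
qed



definition Ef :: "complex \<Rightarrow> complex" where
  "Ef u = (if u = 0 then 1 else (exp u - 1) / u)"

lemma Ef_lim0: "(Ef \<longlongrightarrow> Ef 0) (at 0)"
proof -
  have "(exp has_field_derivative exp 0) (at (0::complex))" by (rule DERIV_exp)
  then have "((\<lambda>y::complex. (exp y - exp 0) / (y - 0)) \<longlongrightarrow> exp 0) (at 0)"
    by (simp only: has_field_derivative_iff)
  then have l: "((\<lambda>y::complex. (exp y - 1) / y) \<longlongrightarrow> 1) (at 0)" by simp
  have "eventually (\<lambda>y::complex. (exp y - 1) / y = Ef y) (at 0)"
    unfolding Ef_def eventually_at by (intro exI[of _ 1]) auto
  from tendsto_cong[THEN iffD1, OF this l] have "(Ef \<longlongrightarrow> 1) (at 0)" .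
  moreover have "Ef 0 = 1" by (simp add: Ef_def)
  ultimately show ?thesis by simp
qed

lemma Ef_holo: "Ef holomorphic_on UNIV"
proof (rule no_isolated_singularity'[where K = "{0}"])
  show "(Ef \<longlongrightarrow> Ef z) (at z within UNIV)" if "z \<in> {0}" for z
    using that Ef_lim0 by simp
  have "(\<lambda>u. (exp u - 1) / u) holomorphic_on (UNIV - {0::complex})"
    by (intro holomorphic_intros) auto
  then show "Ef holomorphic_on (UNIV - {0})"
    by (rule holomorphic_cong[THEN iffD1, rotated 2]) (auto simp: Ef_def)
qed auto

lemma bseq_exists:
  assumes d: "tame_data c \<nu> A"
  shows "\<exists>B. bernoulli_seq c t B"
proof -
  obtain r L where r: "r > 0" and
    hol: "(\<lambda>z. if z = 1 then L else (z - 1) ^ \<nu> * A z) holomorphic_on (ball 0 1 \<union> ball 1 r)"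
    using d unfolding tame_data_def by blast
  define H where "H = (\<lambda>z. if z = 1 then L else (z - 1) ^ \<nu> * A z)"
  have holH: "H holomorphic_on ball 1 r" using hol unfolding H_def
    by (rule holomorphic_on_subset) auto
  have "isCont Ef 0" using Ef_lim0 by (simp add: isCont_def)
  then obtain e1 where e1: "e1 > 0" and e1': "\<And>u. dist u 0 < e1 \<Longrightarrow> dist (Ef u) (Ef 0) < 1"
    unfolding continuous_at_eps_delta by (meson zero_less_one)
  have "isCont exp (0::complex)" by (rule isCont_exp)
  then obtain e2 where e2: "e2 > 0" and e2': "\<And>u::complex. dist u 0 < e2 \<Longrightarrow> dist (exp u) (exp 0) < r"
    unfolding continuous_at_eps_delta using r by meson
  define \<rho> where "\<rho> = min e1 e2"
  have rho: "\<rho> > 0" using e1 e2 unfolding \<rho>_def by simp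
  have Enz: "Ef u \<noteq> 0" if "u \<in> ball 0 \<rho>" for u
  proof
    assume "Ef u = 0"
    moreover have "dist (Ef u) (Ef 0) < 1" using e1'[of u] that by (simp add: \<rho>_def dist_commute)
    ultimately show False by (simp add: Ef_def)
  qed
  have expin: "exp u \<in> ball 1 r" if "u \<in> ball 0 \<rho>" for u :: complex
    using e2'[of u] that by (simp add: \<rho>_def dist_commute)
  define F where "F u = (-1) ^ \<nu> * (inverse (Ef u)) ^ \<nu> * H (exp u) * exp (complex_of_real t * u)" for u
  have holF: "F holomorphic_on ball 0 \<rho>"
  proof -
    have h1: "(\<lambda>u. inverse (Ef u)) holomorphic_on ball 0 \<rho>"
      by (rule holomorphic_on_inverse[OF holomorphic_on_subset[OF Ef_holo]]) (use Enz in auto)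
    have h2: "(H \<circ> exp) holomorphic_on ball 0 \<rho>"
      by (rule holomorphic_on_compose_gen[OF _ holH]) (auto intro: holomorphic_intros expin)
    have h3: "(\<lambda>u. (-1) ^ \<nu> * (inverse (Ef u)) ^ \<nu> * (H \<circ> exp) u * exp (complex_of_real t * u))
        holomorphic_on ball 0 \<rho>"
      by (intro holomorphic_intros h1 h2)
    then show ?thesis unfolding F_def o_def .
  qed
  define B where "B n = (deriv ^^ n) F 0" for n
  have "bernoulli_seq c t B"
    unfolding bernoulli_seq_def
  proof (intro exI conjI)
    show "tame_data c \<nu> A" by (rule d)
    show "\<rho> > 0" by (rule rho)
    show "\<forall>u\<in>ball 0 \<rho> - {0}. (\<lambda>n. B n * u ^ n / fact n) sums
           ((- u) ^ \<nu> * A (exp u) * exp (complex_of_real t * u))"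
    proof
      fix u :: complex assume u: "u \<in> ball 0 \<rho> - {0}"
      have s: "(\<lambda>n. (deriv ^^ n) F 0 / fact n * (u - 0) ^ n) sums F u"
        by (rule holomorphic_power_series[OF holF]) (use u in auto)
      have E: "Ef u = (exp u - 1) / u" using u by (simp add: Ef_def)
      have En: "Ef u \<noteq> 0" using Enz u by auto
      have ex1: "exp u - 1 \<noteq> 0" using En E by auto
      then have ex1': "exp u \<noteq> 1" by simp
      have Hv: "H (exp u) = (exp u - 1) ^ \<nu> * A (exp u)" using ex1' by (simp add: H_def)
      have "(-1) ^ \<nu> * (inverse (Ef u)) ^ \<nu> * (exp u - 1) ^ \<nu> = (- u) ^ \<nu>"
      proof -
        have "(-1) ^ \<nu> * (inverse (Ef u)) ^ \<nu> * (exp u - 1) ^ \<nu>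
            = ((-1) * inverse (Ef u) * (exp u - 1)) ^ \<nu>" by (simp only: power_mult_distrib)
        also have "(-1) * inverse (Ef u) * (exp u - 1) = - u"
          unfolding E using ex1 u by (auto simp: field_simps)
        finally show ?thesis .
      qed
      then have Fu: "F u = (- u) ^ \<nu> * A (exp u) * exp (complex_of_real t * u)"
        unfolding F_def Hv by (simp add: mult.assoc[symmetric])
      have "(\<lambda>n. (deriv ^^ n) F 0 / fact n * (u - 0) ^ n) = (\<lambda>n. B n * u ^ n / fact n)"
        unfolding B_def by (simp add: field_simps)
      with s Fu show "(\<lambda>n. B n * u ^ n / fact n) sums
           ((- u) ^ \<nu> * A (exp u) * exp (complex_of_real t * u))" by simp
    qed
  qed
  then show ?thesis by blast
qed



lemma pseries_holo:
  assumes "\<And>z. norm z < 1 \<Longrightarrow> summable (\<lambda>n. c n * z^n)"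
  shows "pseries c holomorphic_on ball 0 1"
proof (rule power_series_holomorphic[where a = c])
  fix w :: complex assume "w \<in> ball 0 1"
  then have "summable (\<lambda>n. c n * w^n)" using assms by simp
  then show "(\<lambda>n. c n * (w - 0) ^ n) sums pseries c w"
    unfolding pseries_def by (simp add: summable_sums)
qed

lemma real_islimpt:
  assumes "a < (b::real)"
  shows "complex_of_real ((a+b)/2) islimpt (complex_of_real ` {a<..<b})"
  unfolding islimpt_approachable
proof (intro allI impI)
  fix e :: real assume e: "e > 0"
  define y where "y = (a+b)/2 + min e ((b-a)/2) / 2"
  have "y \<in> {a<..<b}" using e assms unfolding y_def by (auto simp: min_def field_simps)
  moreover have "y \<noteq> (a+b)/2" using e assms unfolding y_def by (auto simp: min_def field_simps)
  then have "complex_of_real y \<noteq> complex_of_real ((a+b)/2)" by (metis of_real_eq_iff)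
  moreover have "dist y ((a+b)/2) < e" using e assms unfolding y_def by (auto simp: min_def dist_real_def)
  then have "dist (complex_of_real y) (complex_of_real ((a+b)/2)) < e" by (simp only: dist_of_real)
  ultimately show "\<exists>x'\<in>complex_of_real ` {a<..<b}. x' \<noteq> complex_of_real ((a + b) / 2) \<and>
           dist x' (complex_of_real ((a + b) / 2)) < e"
    by blast
qed

lemma continue_rel:
  fixes c c' :: "nat \<Rightarrow> complex" and k::nat and a x::real
  assumes sc: "\<And>z. norm z < 1 \<Longrightarrow> summable (\<lambda>n. c n * z^n)"
   and sc': "\<And>z. norm z < 1 \<Longrightarrow> summable (\<lambda>n. c' n * z^n)"
   and a: "0 < a" "a < 1"
   and rel: "\<And>x. a < x \<Longrightarrow> x < 1 \<Longrightarrow> pseries c' (of_real x) = (- of_real (ln x))^k * pseries c (of_real x)"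
   and x: "0 < x" "x < 1"
  shows "pseries c' (of_real x) = (- of_real (ln x))^k * pseries c (of_real x)"
proof -
  define S where "S = ball (0::complex) 1 \<inter> {z. Re z > 0}"
  define f where "f z = pseries c' z - (- Ln z)^k * pseries c z" for z
  have oS: "open S" unfolding S_def by (intro open_Int open_halfspace_Re_gt) simp
  have cS: "connected S" unfolding S_def
    by (intro convex_connected convex_Int convex_halfspace_Re_gt) simp
  have hP: "pseries c holomorphic_on S" using pseries_holo[OF sc]
    by (rule holomorphic_on_subset) (auto simp: S_def)
  have hP': "pseries c' holomorphic_on S" using pseries_holo[OF sc']
    by (rule holomorphic_on_subset) (auto simp: S_def)
  have hL: "Ln holomorphic_on S"
    by (rule holomorphic_on_Ln) (auto simp: S_def complex_nonpos_Reals_iff)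
  have hf: "f holomorphic_on S" unfolding f_def
    by (intro holomorphic_intros hP hP' hL)
  have sub: "complex_of_real ` {a<..<1} \<subseteq> S" using a by (auto simp: S_def)
  have xi: "complex_of_real ((a+1)/2) \<in> S" using a by (auto simp: S_def)
  have "f (of_real x) = 0"
  proof (rule analytic_continuation[OF hf oS cS sub xi real_islimpt])
    show "a < 1" by (rule a(2))
    fix z assume "z \<in> complex_of_real ` {a<..<1}"
    then obtain y where y: "a < y" "y < 1" "z = of_real y" by auto
    show "f z = 0" unfolding f_def y(3) Ln_of_real[OF order.strict_trans[OF a(1) y(1)]]
      using rel[OF y(1,2)] by simp
  next
    show "complex_of_real x \<in> S" using x by (auto simp: S_def)
  qed
  then show ?thesis unfolding f_def Ln_of_real[OF x(1)] by simp
qed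



lemma gp_filterlim: "filterlim (\<lambda>s::real. complex_of_real (exp (-s))) (at 0) at_top"
proof -
  have "((\<lambda>s::real. exp (-s)) \<longlongrightarrow> 0) at_top" by real_asymp
  then have "((\<lambda>s::real. complex_of_real (exp (-s))) \<longlongrightarrow> complex_of_real 0) at_top"
    by (intro tendsto_intros)
  then show ?thesis unfolding filterlim_at by simp
qed

lemma least_nz:
  fixes c :: "nat \<Rightarrow> complex"
  assumes "c \<noteq> (\<lambda>_. 0)"
  obtains m where "c m \<noteq> 0" "\<And>n. n < m \<Longrightarrow> c n = 0"
proof -
  have ex: "\<exists>n. c n \<noteq> 0" using assms by auto
  define m where "m = (LEAST n. c n \<noteq> 0)"
  have "c m \<noteq> 0" unfolding m_def by (rule LeastI_ex[OF ex])
  moreover have "\<And>n. n < m \<Longrightarrow> c n = 0" unfolding m_def using not_less_Least by blast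
  ultimately show ?thesis using that by blast
qed

lemma ev_false: "eventually (\<lambda>s::real. False) at_top \<Longrightarrow> False"
  unfolding eventually_at_top_linorder by (meson order_refl)

lemma growth_contra:
  fixes c c' :: "nat \<Rightarrow> complex" and k :: nat
  assumes sc: "\<And>z. norm z < 1 \<Longrightarrow> summable (\<lambda>n. c n * z^n)"
   and sc': "\<And>z. norm z < 1 \<Longrightarrow> summable (\<lambda>n. c' n * z^n)"
   and nz: "c \<noteq> (\<lambda>_. 0)" and nz': "c' \<noteq> (\<lambda>_. 0)" and k: "k > 0"
   and rel: "eventually (\<lambda>s. pseries c' (complex_of_real (exp (-s)))
              = (complex_of_real s)^k * pseries c (complex_of_real (exp (-s)))) at_top"
  shows False
proof -
  define g where "g s = complex_of_real (exp (-s))" for s :: real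
  obtain m where m: "c m \<noteq> 0" "\<And>n. n < m \<Longrightarrow> c n = 0" using least_nz[OF nz] by blast
  obtain m' where m': "c' m' \<noteq> 0" "\<And>n. n < m' \<Longrightarrow> c' n = 0" using least_nz[OF nz'] by blast
  define Q where "Q s = pseries c (g s) / g s ^ m" for s
  define Q' where "Q' s = pseries c' (g s) / g s ^ m'" for s
  have lQ: "(Q \<longlongrightarrow> c m) at_top"
    using filterlim_compose[OF powser_limit_first[OF zero_less_one sc m(2)] gp_filterlim]
    unfolding Q_def g_def pseries_def by simp
  have lQ': "(Q' \<longlongrightarrow> c' m') at_top"
    using filterlim_compose[OF powser_limit_first[OF zero_less_one sc' m'(2)] gp_filterlim]
    unfolding Q'_def g_def pseries_def by simp
  define q where "q s = norm (Q s)" for s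
  define q' where "q' s = norm (Q' s)" for s
  have lq: "(q \<longlongrightarrow> norm (c m)) at_top" unfolding q_def by (intro tendsto_intros lQ)
  have lq': "(q' \<longlongrightarrow> norm (c' m')) at_top" unfolding q'_def by (intro tendsto_intros lQ')
  define \<mu> where "\<mu> = norm (c m) / 2"
  define \<mu>' where "\<mu>' = norm (c' m') / 2"
  define M where "M = norm (c m) + 1"
  define M' where "M' = norm (c' m') + 1"
  have mu: "\<mu> > 0" "\<mu>' > 0" "M > 0" "M' > 0" using m m' norm_ge_zero[of "c m"] norm_ge_zero[of "c' m'"] unfolding \<mu>_def \<mu>'_def M_def M'_def by (auto intro!: add_nonneg_pos)
  have e1: "eventually (\<lambda>s. \<mu> < q s) at_top" by (rule order_tendstoD(1)[OF lq]) (use m in \<open>simp add: \<mu>_def\<close>)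
  have e2: "eventually (\<lambda>s. q s < M) at_top" by (rule order_tendstoD(2)[OF lq]) (simp add: M_def)
  have e3: "eventually (\<lambda>s. \<mu>' < q' s) at_top" by (rule order_tendstoD(1)[OF lq']) (use m' in \<open>simp add: \<mu>'_def\<close>)
  have e4: "eventually (\<lambda>s. q' s < M') at_top" by (rule order_tendstoD(2)[OF lq']) (simp add: M'_def)
  have nrel: "eventually (\<lambda>s. q' s * exp (-s) ^ m' = s ^ k * q s * exp (-s) ^ m) at_top"
    using rel eventually_gt_at_top[of 0]
  proof eventually_elim
    case (elim s)
    have gnz: "g s \<noteq> 0" unfolding g_def by simp
    have ng: "norm (g s) = exp (-s)" unfolding g_def norm_of_real by simp
    have "Q' s * g s ^ m' = pseries c' (g s)" unfolding Q'_def using gnz by simp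
    also have "\<dots> = (complex_of_real s)^k * pseries c (g s)" using elim(1) unfolding g_def .
    also have "pseries c (g s) = Q s * g s ^ m" unfolding Q_def using gnz by simp
    finally have "Q' s * g s ^ m' = (complex_of_real s)^k * (Q s * g s ^ m)" .
    then have "norm (Q' s * g s ^ m') = norm ((complex_of_real s)^k * (Q s * g s ^ m))" by simp
    then show ?case unfolding q_def q'_def norm_mult norm_power ng norm_of_real using elim(2)
      by (simp add: mult.assoc)
  qed
  show False
  proof (cases "m \<le> m'")
    case True
    define d where "d = m' - m"
    have ev: "eventually (\<lambda>s. M' / \<mu> < s) at_top" by (rule eventually_gt_at_top)
    have "eventually (\<lambda>s::real. False) at_top"
      using nrel e1 e4 ev eventually_ge_at_top[of 1]
    proof eventually_elim
      case (elim s)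
      have w: "exp (-s) ^ m' = exp (-s) ^ m * exp (-s) ^ d" unfolding d_def using True
        by (simp add: power_add[symmetric])
      have wm: "exp (-s) ^ m > 0" by simp
      have "q' s * exp (-s) ^ d = s ^ k * q s"
        using elim(1) unfolding w using wm by (simp add: algebra_simps)
      moreover have "exp (-s) ^ d \<le> 1" using elim(5) by (intro power_le_one) auto
      moreover have "q' s \<ge> 0" unfolding q'_def by simp
      ultimately have A: "s ^ k * q s \<le> q' s"
        by (metis mult_left_le mult.commute)
      have "s \<le> s ^ k" using elim(5) k by (simp add: self_le_power)
      then have "s * \<mu> \<le> s ^ k * q s" using elim(2,5) mu
        by (intro mult_mono) auto
      then have "s * \<mu> < M'" using A elim(3) by linarith
      then have "s < M' / \<mu>" using mu by (simp add: field_simps)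
      then show False using elim(4) by linarith
    qed
    then show False by (rule ev_false)
  next
    case False
    define d where "d = m - m'"
    have d1: "d \<ge> 1" using False unfolding d_def by simp
    have lim: "((\<lambda>x. x ^ k / exp x) \<longlongrightarrow> (0::real)) at_top" by (rule tendsto_power_div_exp_0)
    have ev: "eventually (\<lambda>s. s ^ k / exp s < \<mu>' / M) at_top"
      by (rule order_tendstoD(2)[OF lim]) (use mu in simp)
    have "eventually (\<lambda>s::real. False) at_top"
      using nrel e2 e3 ev eventually_ge_at_top[of 1]
    proof eventually_elim
      case (elim s)
      have w: "exp (-s) ^ m = exp (-s) ^ m' * exp (-s) ^ d" unfolding d_def using False
        by (simp add: power_add[symmetric])
      have wm: "exp (-s) ^ m' > 0" by simp
      have eq: "q' s = s ^ k * q s * exp (-s) ^ d"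
        using elim(1) unfolding w using wm by (simp add: algebra_simps)
      have "exp (-s) ^ d \<le> exp (-s) ^ 1"
        by (rule power_decreasing[OF d1]) (use elim(5) in auto)
      then have wd: "exp (-s) ^ d \<le> exp (-s)" by simp
      have qpos: "q s \<ge> 0" unfolding q_def by simp
      have sk: "s ^ k \<ge> 0" using elim(5) by simp
      have "q' s \<le> s ^ k * M * exp (-s)"
        unfolding eq using wd qpos sk elim(2)
        by (intro mult_mono) auto
      also have "\<dots> = M * (s ^ k / exp s)" by (simp add: exp_minus field_simps)
      also have "\<dots> < M * (\<mu>' / M)" using elim(4) mu by (intro mult_strict_left_mono) auto
      also have "\<dots> = \<mu>'" using mu by simp
      finally show False using elim(3) by linarith
    qed
    then show False by (rule ev_false)
  qed
qed



lemma key_le: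
  fixes c c' :: "nat \<Rightarrow> complex" and k :: nat
  assumes sc: "\<And>z. norm z < 1 \<Longrightarrow> summable (\<lambda>n. c n * z^n)"
   and sc': "\<And>z. norm z < 1 \<Longrightarrow> summable (\<lambda>n. c' n * z^n)"
   and rel: "\<And>x. 0 < x \<Longrightarrow> x < 1 \<Longrightarrow> pseries c' (of_real x) = (- of_real (ln x))^k * pseries c (of_real x)"
  shows "c = c'"
proof -
  define g where "g s = complex_of_real (exp (-s))" for s :: real
  have gn: "norm (g s) < 1" if "s > 0" for s unfolding g_def norm_of_real using that by simp
  have relg: "eventually (\<lambda>s. pseries c' (g s) = (complex_of_real s)^k * pseries c (g s)) at_top"
    using eventually_gt_at_top[of 0]
  proof eventually_elim
    case (elim s)
    have "pseries c' (g s) = (- of_real (ln (exp (-s))))^k * pseries c (g s)"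
      unfolding g_def by (rule rel) (use elim in auto)
    then show ?case by simp
  qed
  have fl: "filterlim g (at 0) at_top" unfolding g_def by (rule gp_filterlim)
  show ?thesis
  proof (cases "k = 0")
    case True
    define a where "a n = c n - c' n" for n
    have sa: "summable (\<lambda>n. a n * z^n)" if "norm z < 1" for z
    proof -
      have "summable (\<lambda>n. c n * z^n - c' n * z^n)" by (intro summable_diff sc sc' that)
      then show ?thesis unfolding a_def by (simp add: algebra_simps)
    qed
    have ev: "eventually (\<lambda>s. (\<Sum>n. a n * g s ^ n) = 0) at_top"
      using relg eventually_gt_at_top[of 0]
    proof eventually_elim
      case (elim s)
      have "(\<Sum>n. c n * g s ^ n - c' n * g s ^ n) = pseries c (g s) - pseries c' (g s)"
        unfolding pseries_def by (rule sym, rule suminf_diff[OF sc[OF gn[OF elim(2)]] sc'[OF gn[OF elim(2)]]])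
      then show ?case using elim(1) True unfolding a_def by (simp add: algebra_simps)
    qed
    have "a = (\<lambda>_. 0)" by (rule powser_unique0[OF zero_less_one sa _ fl ev]) simp_all
    then show ?thesis unfolding a_def by (auto simp: fun_eq_iff dest: fun_cong)
  next
    case False
    show ?thesis
    proof (cases "c = (\<lambda>_. 0)")
      case True
      have ev: "eventually (\<lambda>s. (\<Sum>n. c' n * g s ^ n) = 0) at_top"
        using relg proof eventually_elim
        case (elim s) then show ?case using True by (simp add: pseries_def)
      qed
      have "c' = (\<lambda>_. 0)" by (rule powser_unique0[OF zero_less_one sc' _ fl ev]) simp_all
      with True show ?thesis by simp
    next
      case cnz: False
      show ?thesis
      proof (cases "c' = (\<lambda>_. 0)")
        case True
        have ev: "eventually (\<lambda>s. (\<Sum>n. c n * g s ^ n) = 0) at_top"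
          using relg eventually_gt_at_top[of 0] proof eventually_elim
          case (elim s)
          have "pseries c' (g s) = 0" using True by (simp add: pseries_def)
          then have "(complex_of_real s)^k * pseries c (g s) = 0" using elim(1) by simp
          moreover have "(complex_of_real s)^k \<noteq> 0" using elim(2) by simp
          ultimately show ?case unfolding pseries_def by (simp only: mult_eq_0_iff) simp
        qed
        have "c = (\<lambda>_. 0)" by (rule powser_unique0[OF zero_less_one sc _ fl ev]) simp_all
        with cnz show ?thesis by simp
      next
        case False
        have "False"
          by (rule growth_contra[OF sc sc' cnz False]) (use \<open>k \<noteq> 0\<close> relg in \<open>simp_all add: g_def\<close>)
        then show ?thesis ..
      qed
    qed
  qed
qed

lemma key_dir:
  fixes c c' :: "nat \<Rightarrow> complex"
  assumes sc: "\<And>z. norm z < 1 \<Longrightarrow> summable (\<lambda>n. c n * z^n)"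
   and sc': "\<And>z. norm z < 1 \<Longrightarrow> summable (\<lambda>n. c' n * z^n)"
   and a: "0 < a" "a < 1" and le: "\<nu>' \<le> \<nu>"
   and rel: "\<And>x. a < x \<Longrightarrow> x < 1 \<Longrightarrow>
       (- of_real (ln x))^\<nu> * pseries c (of_real x) = (- of_real (ln x))^\<nu>' * pseries c' (of_real x)"
  shows "c = c'"
proof (rule key_le[OF sc sc', of "\<nu> - \<nu>'"])
  fix x :: real assume x: "0 < x" "x < 1"
  show "pseries c' (of_real x) = (- of_real (ln x))^(\<nu> - \<nu>') * pseries c (of_real x)"
  proof (rule continue_rel[OF sc sc' a _ x])
    fix y :: real assume y: "a < y" "y < 1"
    have ln: "ln y < 0" using y a by simp
    have nz: "(- complex_of_real (ln y))^\<nu>' \<noteq> 0" using ln by simp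
    have pw: "(- complex_of_real (ln y))^\<nu> = (- complex_of_real (ln y))^\<nu>' * (- complex_of_real (ln y))^(\<nu> - \<nu>')"
      unfolding power_add[symmetric] using le by simp
    have "(- complex_of_real (ln y))^\<nu>' * ((- complex_of_real (ln y))^(\<nu> - \<nu>') * pseries c (of_real y)) =
       (- complex_of_real (ln y))^\<nu>' * pseries c' (of_real y)"
      using rel[OF y] unfolding pw by (simp only: mult.assoc)
    then have "(- complex_of_real (ln y))^(\<nu> - \<nu>') * pseries c (of_real y) = pseries c' (of_real y)"
      using nz by (rule mult_left_cancel[THEN iffD1, rotated])
    then show "pseries c' (of_real y) = (- of_real (ln y))^(\<nu> - \<nu>') * pseries c (of_real y)"
      by (rule sym)
  qed
qed

lemma key:
  fixes c c' :: "nat \<Rightarrow> complex"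
  assumes sc: "\<And>z. norm z < 1 \<Longrightarrow> summable (\<lambda>n. c n * z^n)"
   and sc': "\<And>z. norm z < 1 \<Longrightarrow> summable (\<lambda>n. c' n * z^n)"
   and a: "0 < a" "a < 1"
   and rel: "\<And>x. a < x \<Longrightarrow> x < 1 \<Longrightarrow>
       (- of_real (ln x))^\<nu> * pseries c (of_real x) = (- of_real (ln x))^\<nu>' * pseries c' (of_real x)"
  shows "c = c'"
proof (cases "\<nu>' \<le> \<nu>")
  case True
  show ?thesis by (rule key_dir[OF sc sc' a True rel])
next
  case False
  then have le: "\<nu> \<le> \<nu>'" by simp
  have "c' = c"
  proof (rule key_dir[of c' c a \<nu> \<nu>'])
    fix x :: real assume x: "a < x" "x < 1"
    show "(- of_real (ln x))^\<nu>' * pseries c' (of_real x) = (- of_real (ln x))^\<nu> * pseries c (of_real x)"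
      by (rule sym, rule rel[OF x])
  qed (use sc sc' a le in auto)
  then show ?thesis by simp
qed

lemma bpoly_seq:
  assumes "tame c"
  shows "bernoulli_seq c t (\<lambda>n. bernoulli_poly c n t)"
proof -
  obtain \<nu> A where d: "tame_data c \<nu> A" using assms unfolding tame_def by blast
  obtain B0 where B0: "bernoulli_seq c t B0" using bseq_exists[OF d, of t] by (elim exE)
  have "\<exists>!B. bernoulli_seq c t B"
    by (rule ex1I[where P="\<lambda>B. bernoulli_seq c t B" and a=B0, OF B0]) (rule bseq_unique[OF _ B0])
  then have "bernoulli_seq c t (THE B. bernoulli_seq c t B)" by (rule theI')
  moreover have "(\<lambda>n. bernoulli_poly c n t) = (THE B. bernoulli_seq c t B)"
    unfolding bernoulli_poly_def by simp
  ultimately show ?thesis by simp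
qed

theorem mainTheorem7:
  fixes t0 :: real and c c' :: "nat \<Rightarrow> complex"
  assumes "t0 > 0" and "tame c" and "tame c'"
    and "\<forall>n. bernoulli_poly c n t0 = bernoulli_poly c' n t0"
  shows "c = c'"
proof -
  define B where "B = (\<lambda>n. bernoulli_poly c n t0)"
  have b1: "bernoulli_seq c t0 B" unfolding B_def by (rule bpoly_seq[OF assms(2)])
  have "B = (\<lambda>n. bernoulli_poly c' n t0)" unfolding B_def using assms(4) by simp
  then have b2: "bernoulli_seq c' t0 B" using bpoly_seq[OF assms(3), of t0] by (simp only:)
  obtain \<nu> A \<rho> where d1: "tame_data c \<nu> A" and r1: "\<rho> > 0" and
    s1: "\<And>u. u \<in> ball 0 \<rho> - {0} \<Longrightarrow> (\<lambda>n. B n * u ^ n / fact n) sums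
             ((- u) ^ \<nu> * A (exp u) * exp (complex_of_real t0 * u))"
    using b1 unfolding bernoulli_seq_def by blast
  obtain \<nu>' A' \<rho>' where d2: "tame_data c' \<nu>' A'" and r2: "\<rho>' > 0" and
    s2: "\<And>u. u \<in> ball 0 \<rho>' - {0} \<Longrightarrow> (\<lambda>n. B n * u ^ n / fact n) sums
             ((- u) ^ \<nu>' * A' (exp u) * exp (complex_of_real t0 * u))"
    using b2 unfolding bernoulli_seq_def by blast
  define \<delta> where "\<delta> = min \<rho> \<rho>'"
  have dl: "\<delta> > 0" using r1 r2 unfolding \<delta>_def by simp
  define a where "a = exp (- \<delta>)"
  have a: "0 < a" "a < 1" unfolding a_def using dl by auto
  show ?thesis
  proof (rule key[OF tame_data_summ[OF d1] tame_data_summ[OF d2] a])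
    fix x :: real assume x: "a < x" "x < 1"
    have xp: "x > 0" using x a by simp
    have l1: "ln x < 0" using x xp by simp
    have "ln (exp (- \<delta>)) < ln x" using x(1) xp unfolding a_def by (subst ln_less_cancel_iff) auto
    then have l2: "- \<delta> < ln x" by simp
    define u where "u = complex_of_real (ln x)"
    have un: "norm u = - ln x" unfolding u_def norm_of_real using l1 by simp
    have u0: "u \<noteq> 0" unfolding u_def using l1 by simp
    have u1: "u \<in> ball 0 \<rho> - {0}" using un u0 l2 unfolding \<delta>_def by (simp add: dist_norm)
    have u2: "u \<in> ball 0 \<rho>' - {0}" using un u0 l2 unfolding \<delta>_def by (simp add: dist_norm)
    have eu: "exp u = complex_of_real x" unfolding u_def exp_of_real using xp by simp
    have xb: "complex_of_real x \<in> ball 0 1" using xp x by (simp add: dist_norm)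
    have "(- u) ^ \<nu> * A (exp u) * exp (complex_of_real t0 * u) =
          (- u) ^ \<nu>' * A' (exp u) * exp (complex_of_real t0 * u)"
      using sums_unique2[OF s1[OF u1] s2[OF u2]] .
    moreover have "exp (complex_of_real t0 * u) \<noteq> 0" by simp
    ultimately have "(- u) ^ \<nu> * A (exp u) = (- u) ^ \<nu>' * A' (exp u)" by (rule mult_right_cancel[THEN iffD1, rotated])
    then have "(- u) ^ \<nu> * A (of_real x) = (- u) ^ \<nu>' * A' (of_real x)" by (simp only: eu)
    then have "(- u) ^ \<nu> * pseries c (of_real x) = (- u) ^ \<nu>' * pseries c' (of_real x)"
      by (simp only: tame_data_A[OF d1 xb] tame_data_A[OF d2 xb])
    then show "(- of_real (ln x))^\<nu> * pseries c (of_real x) = (- of_real (ln x))^\<nu>' * pseries c' (of_real x)"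
      by (simp only: u_def)
  qed
qed

end
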